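(* Let $p(x)$ be a probability distribution on a feature space $\mathcal X$, let $p_{\mathrm{CM}}(y\mid x)$, $y\in\{+1,-1\}$, be a conditional probability distribution, and let $\mathcal D_{\mathrm{CM}}=p(x)\,p_{\mathrm{CM}}(y\mid x)$. Let $p_{\mathrm{TM}}(y\mid x;\theta)$ be a conditional probability distribution on $\{+1,-1\}$ (for a fixed parameter $\theta$) with $p_{\mathrm{TM}}(y\mid x;\theta)>0$ for all $x,y$. Then $$\Big(\mathbb E_{\mathcal D_{\mathrm{CM}}}\big[\mathbf 1_{p_{\mathrm{TM}}(y\mid x;\theta)\le 1/2}\big]\Big)^2\le\mathbb E_{p(x)}\Big[-p_{\mathrm{CM}}(+1\mid x)\log p_{\mathrm{TM}}(+1\mid x;\theta)-p_{\mathrm{CM}}(-1\mid x)\log p_{\mathrm{TM}}(-1\mid x;\theta)+2e^{-2|\log p_{\mathrm{TM}}(-1\mid x;\theta)-\log p_{\mathrm{TM}}(+1\mid x;\theta)|}\Big].$$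
   Context: Binary classification with labels $y\in\{+1,-1\}$; the target model classifies by $\mathrm{argmax}_y p_{\mathrm{TM}}(y\mid x;\theta)$, and the left-hand side is (an upper bound on) its misclassification error under $\mathcal D_{\mathrm{CM}}$. *)

theory Defs
  imports "HOL-Probability.Probability"
begin

definition labels :: "int set" where "labels = {1, -1}"

end

theory Submission
  imports Defs
begin

lemma side:
  fixes a q p :: real
  assumes a: "0 \<le> a" "a \<le> 1" and q: "0 < q" "q \<le> 1/2" "q + p = 1"
  shows "a \<le> - a * ln q + 2 * exp (-2 * \<bar>ln p - ln q\<bar>)"
proof -
  have p: "p > 0" "q \<le> p" using q by auto
  have e: "exp (-2 * \<bar>ln p - ln q\<bar>) = (q/p)^2"
  proof -
    have "\<bar>ln p - ln q\<bar> = ln p - ln q" using p q by simp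
    hence "exp (-2 * \<bar>ln p - ln q\<bar>) = exp (2 * (ln q - ln p))" by simp
    also have "\<dots> = exp (ln q - ln p)^2" by (simp add: exp_of_nat_mult[symmetric] power2_eq_square exp_add[symmetric])
    also have "exp (ln q - ln p) = q/p" using p q by (simp add: exp_diff)
    finally show ?thesis .
  qed
  show ?thesis
  proof (cases "q \<le> exp (-1)")
    case True
    have "ln q \<le> ln (exp (-1))" using True q by (subst ln_le_cancel_iff) auto
    hence "1 \<le> - ln q" by simp
    hence "a * 1 \<le> a * (- ln q)" using a by (intro mult_left_mono) auto
    hence "a \<le> - a * ln q" by simp
    moreover have "0 \<le> 2 * exp (-2 * \<bar>ln p - ln q\<bar>)" by simp
    ultimately show ?thesis by linarith
  next
    case False
    have "exp (-1) * 3 \<ge> (1::real)" using exp_le by (simp add: exp_minus field_simps)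
    hence q3: "q > 1/3" using False by linarith
    have "p < 2/3" using q3 q by linarith
    hence "q/p > 1/2" using q3 p by (simp add: field_simps)
    hence "(q/p)^2 \<ge> (1/2)^2" by (intro power_mono) auto
    hence h: "(q/p)^2 \<ge> (1/2)^2" .
    have "(1/2::real)^2 = 1/4" by (simp add: power2_eq_square)
    hence r: "2 * exp (-2 * \<bar>ln p - ln q\<bar>) \<ge> 1/2" using e h by linarith
    have "ln q \<le> q - 1" using q by (intro ln_le_minus_one) auto
    hence "- ln q \<ge> 1/2" using q by linarith
    hence "a * (1/2) \<le> a * (- ln q)" using a by (intro mult_left_mono) auto
    hence "- a * ln q \<ge> a / 2" by simp
    then show ?thesis using r a by linarith
  qed
qed

lemma pw:
  fixes a b q p :: real
  assumes "0 \<le> a" "0 \<le> b" "a + b = 1" "0 < q" "0 < p" "q + p = 1"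
  shows "a * (if q \<le> 1/2 then 1 else 0) + b * (if p \<le> 1/2 then 1 else 0)
     \<le> - a * ln q - b * ln p + 2 * exp (-2 * \<bar>ln p - ln q\<bar>)"
proof -
  have lq: "ln q \<le> 0" and lp: "ln p \<le> 0" using assms by auto
  have nq: "- a * ln q \<ge> 0" using lq assms by (simp add: mult_nonneg_nonpos)
  have np: "- b * ln p \<ge> 0" using lp assms by (simp add: mult_nonneg_nonpos)
  consider "q < 1/2" | "p < 1/2" | "q = 1/2" "p = 1/2" using assms by linarith
  then show ?thesis
  proof cases
    case 1
    have "a \<le> - a * ln q + 2 * exp (-2 * \<bar>ln p - ln q\<bar>)"
      using 1 assms by (intro side) auto
    then show ?thesis using 1 assms np by auto
  next
    case 2
    have "b \<le> - b * ln p + 2 * exp (-2 * \<bar>ln q - ln p\<bar>)"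
      using 2 assms by (intro side) auto
    moreover have "\<bar>ln q - ln p\<bar> = \<bar>ln p - ln q\<bar>" by simp
    ultimately show ?thesis using 2 assms nq by auto
  next
    case 3
    have "2 * exp (-2 * \<bar>ln p - ln q\<bar>) = 2" using 3 by simp
    moreover have "- a * ln q - b * ln p = - ln (1/2)" using 3 assms
    proof -
      have "- a * ln q - b * ln p = - (a + b) * ln (1/2)" by (simp only: 3) (simp add: algebra_simps)
      then show ?thesis using assms by simp
    qed
    moreover have "- ln (1/2::real) \<ge> 0" by simp
    moreover have "a * (if q \<le> 1/2 then 1 else 0) + b * (if p \<le> 1/2 then 1 else 0) = 1"
      using 3 assms by simp
    ultimately show ?thesis by linarith
  qed
qed

theorem theorem1:
  fixes M :: "'a measure"
    and pCM :: "'a \<Rightarrow> int \<Rightarrow> real"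
    and pTM :: "'a \<Rightarrow> int \<Rightarrow> real"
  assumes "prob_space M"
    and "\<And>y. y \<in> labels \<Longrightarrow> (\<lambda>x. pCM x y) \<in> borel_measurable M"
    and "\<And>y. y \<in> labels \<Longrightarrow> (\<lambda>x. pTM x y) \<in> borel_measurable M"
    and "\<And>x y. x \<in> space M \<Longrightarrow> y \<in> labels \<Longrightarrow> pCM x y \<ge> 0"
    and "\<And>x. x \<in> space M \<Longrightarrow> (\<Sum>y\<in>labels. pCM x y) = 1"
    and "\<And>x y. x \<in> space M \<Longrightarrow> y \<in> labels \<Longrightarrow> pTM x y > 0"
    and "\<And>x. x \<in> space M \<Longrightarrow> (\<Sum>y\<in>labels. pTM x y) = 1"
  shows "ennreal ((\<integral>x. (\<Sum>y\<in>labels. pCM x y * (if pTM x y \<le> 1/2 then 1 else 0)) \<partial>M) ^ 2)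
    \<le> (\<integral>\<^sup>+x. ennreal (- pCM x 1 * ln (pTM x 1) - pCM x (-1) * ln (pTM x (-1))
          + 2 * exp (-2 * \<bar>ln (pTM x (-1)) - ln (pTM x 1)\<bar>)) \<partial>M)"

proof -
  interpret prob_space M by fact
  note m1 = assms(2)[of 1] assms(2)[of "-1"] assms(3)[of 1] assms(3)[of "-1"]
  have [measurable]: "(\<lambda>x. pCM x 1) \<in> borel_measurable M" "(\<lambda>x. pCM x (-1)) \<in> borel_measurable M"
    "(\<lambda>x. pTM x 1) \<in> borel_measurable M" "(\<lambda>x. pTM x (-1)) \<in> borel_measurable M"
    using m1 by (auto simp: labels_def)
  define e where "e x = pCM x 1 * (if pTM x 1 \<le> 1/2 then 1 else 0) + pCM x (-1) * (if pTM x (-1) \<le> 1/2 then 1 else (0::real))" for x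
  have eq: "(\<lambda>x. \<Sum>y\<in>labels. pCM x y * (if pTM x y \<le> 1/2 then 1 else 0)) = e"
    by (auto simp: labels_def e_def fun_eq_iff)
  have em: "e \<in> borel_measurable M" unfolding e_def by measurable
  have pCM: "pCM x 1 \<ge> 0" "pCM x (-1) \<ge> 0" "pCM x 1 + pCM x (-1) = 1" if "x \<in> space M" for x
    using assms(4)[OF that, of 1] assms(4)[OF that, of "-1"] assms(5)[OF that] by (auto simp: labels_def)
  have pTM: "pTM x 1 > 0" "pTM x (-1) > 0" "pTM x 1 + pTM x (-1) = 1" if "x \<in> space M" for x
    using assms(6)[OF that, of 1] assms(6)[OF that, of "-1"] assms(7)[OF that] by (auto simp: labels_def)
  have e01: "0 \<le> e x" "e x \<le> 1" if "x \<in> space M" for x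
    using pCM[OF that] by (auto simp: e_def)
  have ei: "integrable M e"
    by (rule integrable_const_bound[where B=1]) (use e01 em in auto)
  have I0: "0 \<le> integral\<^sup>L M e" using e01 by (intro integral_nonneg_AE) auto
  have "integral\<^sup>L M e \<le> integral\<^sup>L M (\<lambda>_. 1)"
    using e01 ei by (intro integral_mono) auto
  hence I1: "integral\<^sup>L M e \<le> 1" by (simp add: prob_space)
  have "(integral\<^sup>L M e)^2 \<le> integral\<^sup>L M e" using I0 I1 by (simp add: power2_eq_square mult_left_le)
  hence "ennreal ((integral\<^sup>L M e)^2) \<le> ennreal (integral\<^sup>L M e)" by (rule ennreal_leI)
  also have "\<dots> = (\<integral>\<^sup>+x. ennreal (e x) \<partial>M)"
    using ei e01 by (intro nn_integral_eq_integral[symmetric]) auto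
  also have "\<dots> \<le> (\<integral>\<^sup>+x. ennreal (- pCM x 1 * ln (pTM x 1) - pCM x (-1) * ln (pTM x (-1))
          + 2 * exp (-2 * \<bar>ln (pTM x (-1)) - ln (pTM x 1)\<bar>)) \<partial>M)"
    apply (intro nn_integral_mono ennreal_leI)
    unfolding e_def proof -
    fix x assume x: "x \<in> space M"
    show "pCM x 1 * (if pTM x 1 \<le> 1 / 2 then 1 else 0) + pCM x (- 1) * (if pTM x (- 1) \<le> 1 / 2 then 1 else 0)
         \<le> - pCM x 1 * ln (pTM x 1) - pCM x (- 1) * ln (pTM x (- 1)) + 2 * exp (- 2 * \<bar>ln (pTM x (- 1)) - ln (pTM x 1)\<bar>)"
      by (rule pw[OF pCM[OF x] pTM[OF x]])
  qed
  finally show ?thesis unfolding eq .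
qed

end
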